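(* Let $n\ge1$, let $K$ be a compact set in $\mathbb{R}^n$ and let $u\in S^{n-1}$. Then $$\frac{|K+B_2^n|}{|P_{u^\perp}(K+B_2^n)|_{n-1}}\ge\frac{|B_2^n|}{|B_2^{n-1}|_{n-1}}.$$
   Context: $B_2^n$ is the closed Euclidean unit ball of $\mathbb{R}^n$, $S^{n-1}$ its boundary sphere, $B_2^{n-1}$ the $(n-1)$-dimensional Euclidean unit ball; $P_{u^\perp}$ is orthogonal projection onto the hyperplane $u^\perp=\{x:x\cdot u=0\}$; $|\cdot|_{k}$ is $k$-dimensional volume and $|\cdot|=|\cdot|_n$; $+$ is Minkowski addition. *)

theory Defs
  imports "HOL-Analysis.Analysis"
begin

definition minkowski_sum :: "'a::real_vector set \<Rightarrow> 'a set \<Rightarrow> 'a set" where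
  "minkowski_sum A B = {x + y | x y. x \<in> A \<and> y \<in> B}"

definition proj_perp :: "'a::euclidean_space \<Rightarrow> 'a \<Rightarrow> 'a" where
  "proj_perp u x = x - (x \<bullet> u) *\<^sub>R u"

definition perp_onb :: "'a::euclidean_space \<Rightarrow> (nat \<Rightarrow> 'a) \<Rightarrow> bool" where
  "perp_onb u b \<longleftrightarrow>
     (\<forall>i<DIM('a) - 1. b i \<bullet> u = 0 \<and> norm (b i) = 1) \<and>
     (\<forall>i<DIM('a) - 1. \<forall>j<DIM('a) - 1. i \<noteq> j \<longrightarrow> b i \<bullet> b j = 0)"

text \<open>Lebesgue measure on R^m, modelled as the product measure on functions {..<m} -> R.
  For m = 0 this is the unit point mass.\<close>
abbreviation lebesgue_dim :: "nat \<Rightarrow> (nat \<Rightarrow> real) measure" where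
  "lebesgue_dim m \<equiv> Pi\<^sub>M {..<m} (\<lambda>_. lborel)"

text \<open>(n-1)-dimensional volume of a subset S of the hyperplane u-perp in an n-dimensional
  Euclidean space: pull S back along the linear isometry R^(n-1) -> u-perp given by an
  orthonormal basis of u-perp and take the (n-1)-dimensional Lebesgue measure.\<close>
definition hyperplane_vol :: "'a::euclidean_space \<Rightarrow> 'a set \<Rightarrow> real" where
  "hyperplane_vol u S =
     (let b = (SOME b. perp_onb u b) in
      measure (lebesgue_dim (DIM('a) - 1))
        {y \<in> PiE {..<DIM('a) - 1} (\<lambda>_. UNIV). (\<Sum>i<DIM('a) - 1. y i *\<^sub>R b i) \<in> S})"

definition unit_ball_vol :: "nat \<Rightarrow> real" where
  "unit_ball_vol m =
     measure (lebesgue_dim m) {y \<in> PiE {..<m} (\<lambda>_. UNIV). (\<Sum>i<m. (y i)^2) \<le> 1}"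

end

theory Submission
  imports Defs
begin

lemma lborel_affine_preimage:
  fixes a c :: real and A :: "real set"
  assumes "a > 0" "A \<in> sets borel"
  shows "emeasure lborel {x. a * x + c \<in> A} = ennreal (1/a) * emeasure lborel A"
proof -
  have "emeasure lborel A = emeasure (density (distr lborel borel (\<lambda>x. c + a * x)) (\<lambda>_. ennreal \<bar>a\<bar>)) A"
    using lborel_real_affine[of a c] assms by simp
  also have "\<dots> = ennreal a * emeasure lborel ((\<lambda>x. c + a * x) -` A)"
    using assms by (simp add: emeasure_density_const emeasure_distr)
  finally have "emeasure lborel A = ennreal a * emeasure lborel {x. a * x + c \<in> A}"
    by (simp add: vimage_def add.commute)
  then have "ennreal (1/a) * emeasure lborel A = ennreal (1/a) * ennreal a * emeasure lborel {x. a * x + c \<in> A}"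
    by (simp add: mult.assoc)
  also have "ennreal (1/a) * ennreal a = 1" using assms
    by (simp add: ennreal_mult'[symmetric])
  finally show ?thesis by simp
qed

lemma PiM_affine:
  fixes I :: "'i set" and a :: real and c :: "'i \<Rightarrow> real"
  assumes I: "finite I" and a: "a > 0" and X: "X \<in> sets (PiM I (\<lambda>_. lborel))"
  shows "emeasure (PiM I (\<lambda>_. lborel))
           {z \<in> space (PiM I (\<lambda>_. lborel)). (\<lambda>i\<in>I. a * z i + c i) \<in> X}
         = ennreal ((1/a) ^ card I) * emeasure (PiM I (\<lambda>_. lborel)) X"
proof -
  interpret product_sigma_finite "\<lambda>_. lborel :: real measure" by standard
  define M where "M = PiM I (\<lambda>_. lborel :: real measure)"
  define f where "f = (\<lambda>z. \<lambda>i\<in>I. a * z i + c i)"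
  have fm: "f \<in> M \<rightarrow>\<^sub>M M"
    unfolding f_def M_def by measurable
  define P where "P = density (distr M M f) (\<lambda>_. ennreal (a ^ card I))"
  have "P = PiM I (\<lambda>_. lborel)"
  proof (rule PiM_eqI[OF I])
    show "sets P = sets (PiM I (\<lambda>_. lborel))" by (simp add: P_def M_def)
    fix A assume A: "\<And>i. i \<in> I \<Longrightarrow> A i \<in> sets (lborel :: real measure)"
    have PA: "Pi\<^sub>E I A \<in> sets M" using A unfolding M_def by (auto intro: sets_PiM_I_finite I)
    have pre: "f -` Pi\<^sub>E I A \<inter> space M = Pi\<^sub>E I (\<lambda>i. {x. a * x + c i \<in> A i})"
      by (auto simp: f_def M_def space_PiM PiE_def Pi_def extensional_def)
    have "emeasure P (Pi\<^sub>E I A) = ennreal (a ^ card I) * emeasure M (Pi\<^sub>E I (\<lambda>i. {x. a * x + c i \<in> A i}))"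
      using PA fm by (simp add: P_def emeasure_density_const emeasure_distr pre)
    also have "emeasure M (Pi\<^sub>E I (\<lambda>i. {x. a * x + c i \<in> A i})) = (\<Prod>i\<in>I. emeasure lborel {x. a * x + c i \<in> A i})"
      unfolding M_def using A I by (subst emeasure_PiM) auto
    also have "\<dots> = (\<Prod>i\<in>I. ennreal (1/a) * emeasure lborel (A i))"
      using A a by (intro prod.cong refl lborel_affine_preimage) auto
    also have "\<dots> = ennreal (1/a) ^ card I * (\<Prod>i\<in>I. emeasure lborel (A i))"
      by (simp add: prod.distrib)
    also have "ennreal (a ^ card I) * (ennreal (1/a) ^ card I * (\<Prod>i\<in>I. emeasure lborel (A i)))
       = (ennreal a * ennreal (1/a)) ^ card I * (\<Prod>i\<in>I. emeasure lborel (A i))"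
      using a by (simp add: ennreal_power power_mult_distrib mult.assoc)
    also have "ennreal a * ennreal (1/a) = 1" using a by (simp add: ennreal_mult'[symmetric])
    finally show "emeasure P (Pi\<^sub>E I A) = (\<Prod>i\<in>I. emeasure lborel (A i))" by simp
  qed
  then have "emeasure M X = emeasure P X" by (simp add: M_def)
  also have "\<dots> = ennreal (a ^ card I) * emeasure (distr M M f) X"
    using X fm unfolding P_def M_def by (subst emeasure_density_const) auto
  also have "\<dots> = ennreal (a ^ card I) * emeasure M (f -` X \<inter> space M)"
    using X fm unfolding M_def by (subst emeasure_distr) auto
  finally have "emeasure M X = ennreal (a ^ card I) * emeasure M (f -` X \<inter> space M)" .
  then have "ennreal ((1/a) ^ card I) * emeasure M X = (ennreal ((1/a) ^ card I) * ennreal (a ^ card I)) * emeasure M (f -` X \<inter> space M)"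
    by (simp add: mult.assoc)
  also have "ennreal ((1/a) ^ card I) * ennreal (a ^ card I) = 1"
    using a by (simp add: ennreal_mult'[symmetric] power_mult_distrib[symmetric])
  finally show ?thesis
    by (simp add: M_def f_def vimage_def Int_def conj_commute restrict_def)
qed

definition dsq :: "nat \<Rightarrow> (nat \<Rightarrow> real) \<Rightarrow> (nat \<Rightarrow> real) \<Rightarrow> real" where
  "dsq m z p = (\<Sum>i<m. (z i - p i)\<^sup>2)"

lemma dsq_nonneg: "dsq m z p \<ge> 0"
  by (simp add: dsq_def sum_nonneg)

lemma measurable_dsq[measurable]: "(\<lambda>z. dsq m z p) \<in> borel_measurable (lebesgue_dim m)"
  unfolding dsq_def by measurable

lemma PiM_ball:
  fixes I :: "'i set"
  assumes I: "finite I" and r: "r > 0"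
  shows "emeasure (PiM I (\<lambda>_. lborel)) {z \<in> space (PiM I (\<lambda>_. lborel)). (\<Sum>i\<in>I. (z i - p i)\<^sup>2) \<le> r\<^sup>2}
         = ennreal (Ball_Volume.unit_ball_vol (real (card I)) * r ^ card I)"
proof -
  define X0 where "X0 = {f. sqrt (\<Sum>i\<in>I. (f i)\<^sup>2) \<le> r} \<inter> space (PiM I (\<lambda>_. lborel::real measure))"
  have X0: "X0 \<in> sets (PiM I (\<lambda>_. lborel))" unfolding X0_def using I by measurable
  have eq: "{z \<in> space (PiM I (\<lambda>_. lborel)). (\<lambda>i\<in>I. 1 * z i + (- p i)) \<in> X0}
        = {z \<in> space (PiM I (\<lambda>_. lborel)). (\<Sum>i\<in>I. (z i - p i)\<^sup>2) \<le> r\<^sup>2}"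
  proof -
    have "sqrt (\<Sum>i\<in>I. ((\<lambda>i\<in>I. z i - p i) i)\<^sup>2) \<le> r \<longleftrightarrow> (\<Sum>i\<in>I. (z i - p i)\<^sup>2) \<le> r\<^sup>2" for z
    proof -
      have "(\<Sum>i\<in>I. ((\<lambda>i\<in>I. z i - p i) i)\<^sup>2) = (\<Sum>i\<in>I. (z i - p i)\<^sup>2)"
        by (intro sum.cong) auto
      then show ?thesis using r by (simp add: real_sqrt_le_iff' sum_nonneg)
    qed
    then show ?thesis
      unfolding X0_def by (auto simp: space_PiM PiE_def extensional_def)
  qed
  have "emeasure (PiM I (\<lambda>_. lborel)) {z \<in> space (PiM I (\<lambda>_. lborel)). (\<Sum>i\<in>I. (z i - p i)\<^sup>2) \<le> r\<^sup>2}
     = emeasure (PiM I (\<lambda>_. lborel)) {z \<in> space (PiM I (\<lambda>_. lborel)). (\<lambda>i\<in>I. 1 * z i + (- p i)) \<in> X0}"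
    by (simp only: eq)
  also have "\<dots> = ennreal ((1/1) ^ card I) * emeasure (PiM I (\<lambda>_. lborel)) X0"
    by (rule PiM_affine) (use X0 I in auto)
  also have "emeasure (PiM I (\<lambda>_. lborel)) X0 = ennreal (Ball_Volume.unit_ball_vol (real (card I)) * r ^ card I)"
    unfolding X0_def using emeasure_cball_aux[of I r] r I by simp
  finally show ?thesis by simp
qed

lemma M_ball:
  assumes r: "r > 0"
  shows "emeasure (lebesgue_dim m) {z \<in> space (lebesgue_dim m). dsq m z p \<le> r\<^sup>2}
         = ennreal (Ball_Volume.unit_ball_vol (real m) * r ^ m)"
  using PiM_ball[of "{..<m}" r p] r by (simp add: dsq_def)

lemma sigma_finite_M[simp]: "sigma_finite_measure (lebesgue_dim m)"
proof -
  interpret product_sigma_finite "\<lambda>_. lborel :: real measure" by standard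
  show ?thesis by (rule sigma_finite) simp
qed

lemma pair_to_PiM:
  assumes S: "S \<in> sets (lebesgue_dim m \<Otimes>\<^sub>M lborel)"
  shows "emeasure (lebesgue_dim m \<Otimes>\<^sub>M lborel) S
    = emeasure (PiM (insert m {..<m}) (\<lambda>_. lborel))
        {f \<in> space (PiM (insert m {..<m}) (\<lambda>_. lborel)). (restrict f {..<m}, f m) \<in> S}"
proof -
  interpret product_sigma_finite "\<lambda>_. lborel :: real measure" by standard
  interpret pair_sigma_finite "lebesgue_dim m" "lborel :: real measure"
    by (intro pair_sigma_finite.intro) (simp_all add: lborel.sigma_finite_measure_axioms)
  define S' where "S' = {f \<in> space (PiM (insert m {..<m}) (\<lambda>_. lborel)). (restrict f {..<m}, f m) \<in> S}"
  have S'm: "S' \<in> sets (PiM (insert m {..<m}) (\<lambda>_. lborel))"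
    unfolding S'_def using S by measurable
  have "emeasure (PiM (insert m {..<m}) (\<lambda>_. lborel)) S'
      = (\<integral>\<^sup>+f. indicator S' f \<partial>PiM (insert m {..<m}) (\<lambda>_. lborel))"
    using S'm by simp
  also have "\<dots> = (\<integral>\<^sup>+ y. (\<integral>\<^sup>+ x. indicator S' (x(m := y)) \<partial>lebesgue_dim m) \<partial>lborel)"
    using S'm by (subst product_nn_integral_insert_rev) auto
  also have "\<dots> = (\<integral>\<^sup>+ y. (\<integral>\<^sup>+ x. indicator ((\<lambda>x. (x, y)) -` S \<inter> space (lebesgue_dim m)) x \<partial>lebesgue_dim m) \<partial>lborel)"
  proof (intro nn_integral_cong)
    fix y x assume x: "x \<in> space (lebesgue_dim m)"
    have "restrict (x(m := y)) {..<m} = x"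
      using x by (auto simp: space_PiM PiE_def extensional_def restrict_def fun_eq_iff)
    moreover have "x(m := y) \<in> space (PiM (insert m {..<m}) (\<lambda>_. lborel))"
      using x by (auto simp: space_PiM PiE_def extensional_def)
    ultimately show "indicator S' (x(m := y)) = (indicator ((\<lambda>x. (x, y)) -` S \<inter> space (lebesgue_dim m)) x :: ennreal)"
      using x unfolding S'_def by (auto simp: indicator_def)
  qed
  also have "\<dots> = (\<integral>\<^sup>+ y. emeasure (lebesgue_dim m) ((\<lambda>x. (x, y)) -` S \<inter> space (lebesgue_dim m)) \<partial>lborel)"
  proof (intro nn_integral_cong)
    fix y :: real
    have "(\<lambda>x. (x, y)) -` S \<inter> space (lebesgue_dim m) \<in> sets (lebesgue_dim m)"
      using S by measurable
    then show "(\<integral>\<^sup>+ x. indicator ((\<lambda>x. (x, y)) -` S \<inter> space (lebesgue_dim m)) x \<partial>lebesgue_dim m)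
        = emeasure (lebesgue_dim m) ((\<lambda>x. (x, y)) -` S \<inter> space (lebesgue_dim m))" by simp
  qed
  also have "\<dots> = (\<integral>\<^sup>+ y. emeasure (lebesgue_dim m) ((\<lambda>x. (x, y)) -` S) \<partial>lborel)"
  proof (intro nn_integral_cong arg_cong2[where f=emeasure] refl)
    fix y :: real
    show "(\<lambda>x. (x, y)) -` S \<inter> space (lebesgue_dim m) = (\<lambda>x. (x, y)) -` S"
      using sets.sets_into_space[OF S] by (auto simp: space_pair_measure)
  qed
  also have "\<dots> = emeasure (lebesgue_dim m \<Otimes>\<^sub>M lborel) S"
    using S by (simp add: emeasure_pair_measure_alt2)
  finally show ?thesis unfolding S'_def by simp
qed

lemma X_ball:
  assumes r: "r > 0"
  shows "emeasure (lebesgue_dim m \<Otimes>\<^sub>M lborel)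
           {x \<in> space (lebesgue_dim m \<Otimes>\<^sub>M lborel). dsq m (fst x) p + (snd x - s)\<^sup>2 \<le> r\<^sup>2}
         = ennreal (Ball_Volume.unit_ball_vol (real (Suc m)) * r ^ Suc m)"
proof -
  define S where "S = {x \<in> space (lebesgue_dim m \<Otimes>\<^sub>M lborel). dsq m (fst x) p + (snd x - s)\<^sup>2 \<le> r\<^sup>2}"
  have Sm: "S \<in> sets (lebesgue_dim m \<Otimes>\<^sub>M lborel)" unfolding S_def by measurable
  define p' where "p' = p(m := s)"
  have eq: "{f \<in> space (PiM (insert m {..<m}) (\<lambda>_. lborel)). (restrict f {..<m}, f m) \<in> S}
      = {z \<in> space (PiM (insert m {..<m}) (\<lambda>_. lborel)). (\<Sum>i\<in>insert m {..<m}. (z i - p' i)\<^sup>2) \<le> r\<^sup>2}"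
  proof -
    have "dsq m (restrict f {..<m}) p + (f m - s)\<^sup>2 = (\<Sum>i\<in>insert m {..<m}. (f i - p' i)\<^sup>2)" for f
    proof -
      have "dsq m (restrict f {..<m}) p = (\<Sum>i<m. (f i - p' i)\<^sup>2)"
        unfolding dsq_def p'_def by (intro sum.cong) auto
      then show ?thesis by (simp add: p'_def)
    qed
    then show ?thesis unfolding S_def
      by (auto simp: space_pair_measure space_PiM PiE_def)
  qed
  have "emeasure (lebesgue_dim m \<Otimes>\<^sub>M lborel) S
     = emeasure (PiM (insert m {..<m}) (\<lambda>_. lborel))
        {z \<in> space (PiM (insert m {..<m}) (\<lambda>_. lborel)). (\<Sum>i\<in>insert m {..<m}. (z i - p' i)\<^sup>2) \<le> r\<^sup>2}"
    using pair_to_PiM[OF Sm] eq by simp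
  also have "\<dots> = ennreal (Ball_Volume.unit_ball_vol (real (card (insert m {..<m}))) * r ^ card (insert m {..<m}))"
    by (rule PiM_ball) (use r in auto)
  finally show ?thesis unfolding S_def by simp
qed

lemma dsq_scale:
  "dsq m (\<lambda>i\<in>{..<m}. p i + r * (z i - p i)) p = r\<^sup>2 * dsq m z p"
  unfolding dsq_def by (simp add: sum_distrib_left power_mult_distrib)

lemma restrict_space_eq:
  assumes "z \<in> space (lebesgue_dim m)"
  shows "(\<lambda>i\<in>{..<m}. z i) = z"
  using assms by (auto simp: space_PiM PiE_def extensional_def fun_eq_iff)

lemma star_slice:
  assumes C1: "C1 \<in> sets (lebesgue_dim m)"
  and star: "\<And>z r. z \<in> C1 \<Longrightarrow> 0 < r \<Longrightarrow> r \<le> 1 \<Longrightarrow> (\<lambda>i\<in>{..<m}. p i + r * (z i - p i)) \<in> C1"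
  and sub: "\<And>z. z \<in> C1 \<Longrightarrow> dsq m z p \<le> R" and R: "R \<ge> 0"
  and h: "0 < h" "h \<le> 1"
  shows "ennreal (h ^ m) * emeasure (lebesgue_dim m) C1 \<le> emeasure (lebesgue_dim m) {z \<in> C1. dsq m z p \<le> h\<^sup>2 * R}"
proof -
  have "emeasure (lebesgue_dim m) {z \<in> space (lebesgue_dim m). (\<lambda>i\<in>{..<m}. (1/h) * z i + (p i - p i / h)) \<in> C1}
      = ennreal ((1 / (1/h)) ^ card {..<m}) * emeasure (lebesgue_dim m) C1"
    by (rule PiM_affine) (use C1 h in auto)
  also have "\<dots> = ennreal (h ^ m) * emeasure (lebesgue_dim m) C1" by simp
  finally have eq: "emeasure (lebesgue_dim m) {z \<in> space (lebesgue_dim m). (\<lambda>i\<in>{..<m}. (1/h) * z i + (p i - p i / h)) \<in> C1}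
      = ennreal (h ^ m) * emeasure (lebesgue_dim m) C1" .
  have "{z \<in> space (lebesgue_dim m). (\<lambda>i\<in>{..<m}. (1/h) * z i + (p i - p i / h)) \<in> C1} \<subseteq> {z \<in> C1. dsq m z p \<le> h\<^sup>2 * R}"
  proof safe
    fix z assume z: "z \<in> space (lebesgue_dim m)" and w: "(\<lambda>i\<in>{..<m}. (1/h) * z i + (p i - p i / h)) \<in> C1"
    define w where "w = (\<lambda>i\<in>{..<m}. (1/h) * z i + (p i - p i / h))"
    have zw: "z = (\<lambda>i\<in>{..<m}. p i + h * (w i - p i))"
    proof (rule ext)
      fix i show "z i = (\<lambda>i\<in>{..<m}. p i + h * (w i - p i)) i"
      proof (cases "i < m")
        case True
        have "h * ((1/h) * z i + (p i - p i / h) - p i) = z i - p i"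
          using h by (simp add: algebra_simps)
        then show ?thesis using True by (simp add: w_def)
      next
        case False
        then show ?thesis using z by (simp add: space_PiM PiE_def extensional_def)
      qed
    qed
    have wC: "w \<in> C1" using w by (simp add: w_def)
    have "(\<lambda>i\<in>{..<m}. p i + h * (w i - p i)) \<in> C1" by (rule star[OF wC h])
    then show "z \<in> C1" using zw by simp
    have "dsq m z p = h\<^sup>2 * dsq m w p" using zw dsq_scale[of m p h w] by simp
    also have "\<dots> \<le> h\<^sup>2 * R" using sub[OF wC] by (intro mult_left_mono) auto
    finally show "dsq m z p \<le> h\<^sup>2 * R" by simp
  qed
  then have "emeasure (lebesgue_dim m) {z \<in> space (lebesgue_dim m). (\<lambda>i\<in>{..<m}. (1/h) * z i + (p i - p i / h)) \<in> C1}
      \<le> emeasure (lebesgue_dim m) {z \<in> C1. dsq m z p \<le> h\<^sup>2 * R}"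
    by (rule emeasure_mono) (use C1 in auto)
  with eq show ?thesis by simp
qed

lemma slice_J:
  "ennreal (Ball_Volume.unit_ball_vol (real (Suc m)))
   = ennreal (Ball_Volume.unit_ball_vol (real m)) *
     (\<integral>\<^sup>+t. indicator {s-1<..<s+1} t * ennreal (sqrt (1 - (t - s)\<^sup>2) ^ m) \<partial>lborel)"
proof -
  interpret pair_sigma_finite "lebesgue_dim m" "lborel :: real measure"
    by (intro pair_sigma_finite.intro) (simp_all add: lborel.sigma_finite_measure_axioms)
  define G where "G = {x \<in> space (lebesgue_dim m \<Otimes>\<^sub>M lborel). dsq m (fst x) p + (snd x - s)\<^sup>2 \<le> 1}"
  have Gm: "G \<in> sets (lebesgue_dim m \<Otimes>\<^sub>M lborel)" unfolding G_def by measurable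
  have "ennreal (Ball_Volume.unit_ball_vol (real (Suc m))) = emeasure (lebesgue_dim m \<Otimes>\<^sub>M lborel) G"
    using X_ball[of 1 m p s] unfolding G_def by simp
  also have "\<dots> = (\<integral>\<^sup>+t. emeasure (lebesgue_dim m) ((\<lambda>z. (z, t)) -` G) \<partial>lborel)"
    using Gm by (rule emeasure_pair_measure_alt2)
  also have "\<dots> = (\<integral>\<^sup>+t. ennreal (Ball_Volume.unit_ball_vol (real m)) *
          (indicator {s-1<..<s+1} t * ennreal (sqrt (1 - (t - s)\<^sup>2) ^ m)) \<partial>lborel)"
  proof (rule nn_integral_cong_AE)
    have "AE t in lborel. t \<notin> {s - 1, s + 1}"
      by (intro AE_not_in countable_imp_null_set_lborel) auto
    then show "AE t in lborel. emeasure (lebesgue_dim m) ((\<lambda>z. (z, t)) -` G) =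
        ennreal (Ball_Volume.unit_ball_vol (real m)) *
          (indicator {s-1<..<s+1} t * ennreal (sqrt (1 - (t - s)\<^sup>2) ^ m))"
    proof (rule AE_mp, intro AE_I2 impI)
      fix t :: real assume t: "t \<notin> {s - 1, s + 1}"
      have sl: "(\<lambda>z. (z, t)) -` G = {z \<in> space (lebesgue_dim m). dsq m z p \<le> (sqrt (1 - (t - s)\<^sup>2))\<^sup>2}"
        if "\<bar>t - s\<bar> < 1"
      proof -
        have "(t - s)\<^sup>2 < 1" using that by (simp add: abs_square_less_1)
        then show ?thesis unfolding G_def by (auto simp: space_pair_measure)
      qed
      show "emeasure (lebesgue_dim m) ((\<lambda>z. (z, t)) -` G) =
        ennreal (Ball_Volume.unit_ball_vol (real m)) *
          (indicator {s-1<..<s+1} t * ennreal (sqrt (1 - (t - s)\<^sup>2) ^ m))"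
      proof (cases "\<bar>t - s\<bar> < 1")
        case True
        have "(t - s)\<^sup>2 < 1" using True by (simp add: abs_square_less_1)
        then have pos: "sqrt (1 - (t - s)\<^sup>2) > 0" by simp
        have "t \<in> {s-1<..<s+1}" using True by auto
        then show ?thesis using M_ball[OF pos, of m p] sl[OF True]
          by (simp add: ennreal_mult' mult.commute)
      next
        case False
        then have "\<bar>t - s\<bar> > 1" using t by auto
        then have "\<not> (t - s)\<^sup>2 \<le> 1" using abs_square_le_1[of "t - s"] by simp
        then have "(t - s)\<^sup>2 > 1" by simp
        then have "(\<lambda>z. (z, t)) -` G = {}" unfolding G_def
          using dsq_nonneg[of m _ p] by (auto simp: space_pair_measure) (smt (verit) dsq_nonneg)
        moreover have "t \<notin> {s-1<..<s+1}" using False by auto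
        ultimately show ?thesis by simp
      qed
    qed
  qed
  also have "\<dots> = ennreal (Ball_Volume.unit_ball_vol (real m)) *
     (\<integral>\<^sup>+t. indicator {s-1<..<s+1} t * ennreal (sqrt (1 - (t - s)\<^sup>2) ^ m) \<partial>lborel)"
    by (rule nn_integral_cmult) measurable
  finally show ?thesis .
qed

lemma star_cell:
  assumes C: "C \<in> sets (lebesgue_dim m)"
  and star: "\<And>z r. z \<in> C \<Longrightarrow> 0 < r \<Longrightarrow> r \<le> 1 \<Longrightarrow> (\<lambda>i\<in>{..<m}. p i + r * (z i - p i)) \<in> C"
  and rho: "\<rho> \<ge> 1"
  shows "ennreal (Ball_Volume.unit_ball_vol (real (Suc m))) * ennreal ((1/\<rho>)^m) * emeasure (lebesgue_dim m) {z \<in> C. dsq m z p \<le> \<rho>\<^sup>2}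
       \<le> ennreal (Ball_Volume.unit_ball_vol (real m)) * emeasure (lebesgue_dim m \<Otimes>\<^sub>M lborel)
           {x \<in> space (lebesgue_dim m \<Otimes>\<^sub>M lborel). fst x \<in> C \<and> dsq m (fst x) p + (snd x - s)\<^sup>2 \<le> 1}"
proof -
  interpret pair_sigma_finite "lebesgue_dim m" "lborel :: real measure"
    by (intro pair_sigma_finite.intro) (simp_all add: lborel.sigma_finite_measure_axioms)
  let ?M = "lebesgue_dim m"
  let ?X = "lebesgue_dim m \<Otimes>\<^sub>M lborel"
  let ?J = "\<integral>\<^sup>+t. indicator {s-1<..<s+1} t * ennreal (sqrt (1 - (t - s)\<^sup>2) ^ m) \<partial>lborel"
  have Csp: "C \<subseteq> space ?M" using sets.sets_into_space[OF C] .
  define C1 where "C1 = {z \<in> C. dsq m z p \<le> 1}"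
  define H where "H = {z \<in> C. dsq m z p \<le> \<rho>\<^sup>2}"
  define G where "G = {x \<in> space ?X. fst x \<in> C \<and> dsq m (fst x) p + (snd x - s)\<^sup>2 \<le> 1}"
  have C1m: "C1 \<in> sets ?M" unfolding C1_def using C by measurable
  have Hm: "H \<in> sets ?M" unfolding H_def using C by measurable
  have Gm: "G \<in> sets ?X" unfolding G_def using C by measurable
  have starH: "(\<lambda>i\<in>{..<m}. p i + r * (z i - p i)) \<in> H" if "z \<in> H" "0 < r" "r \<le> 1" for z r
  proof -
    have "dsq m (\<lambda>i\<in>{..<m}. p i + r * (z i - p i)) p = r\<^sup>2 * dsq m z p" by (rule dsq_scale)
    also have "\<dots> \<le> 1 * \<rho>\<^sup>2" using that by (intro mult_mono) (auto simp: H_def power_le_one dsq_nonneg)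
    finally show ?thesis using star that by (auto simp: H_def)
  qed
  have starC1: "(\<lambda>i\<in>{..<m}. p i + r * (z i - p i)) \<in> C1" if "z \<in> C1" "0 < r" "r \<le> 1" for z r
  proof -
    have "dsq m (\<lambda>i\<in>{..<m}. p i + r * (z i - p i)) p = r\<^sup>2 * dsq m z p" by (rule dsq_scale)
    also have "\<dots> \<le> 1 * 1" using that by (intro mult_mono) (auto simp: C1_def power_le_one dsq_nonneg)
    finally show ?thesis using star that by (auto simp: C1_def)
  qed
  have a: "ennreal ((1/\<rho>)^m) * emeasure ?M H \<le> emeasure ?M C1"
  proof -
    have "ennreal ((1/\<rho>)^m) * emeasure ?M H \<le> emeasure ?M {z \<in> H. dsq m z p \<le> (1/\<rho>)\<^sup>2 * \<rho>\<^sup>2}"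
      by (rule star_slice[OF Hm starH]) (use rho in \<open>auto simp: H_def\<close>)
    also have "\<dots> \<le> emeasure ?M C1"
      by (rule emeasure_mono) (use rho C1m in \<open>auto simp: H_def C1_def power_divide\<close>)
    finally show ?thesis .
  qed
  have b: "emeasure ?M C1 * ?J \<le> emeasure ?X G"
  proof -
    have "emeasure ?M C1 * ?J = (\<integral>\<^sup>+t. indicator {s-1<..<s+1} t * ennreal (sqrt (1 - (t - s)\<^sup>2) ^ m) * emeasure ?M C1 \<partial>lborel)"
      by (subst nn_integral_multc) (auto simp: mult.commute)
    also have "\<dots> \<le> (\<integral>\<^sup>+t. emeasure ?M ((\<lambda>z. (z, t)) -` G) \<partial>lborel)"
    proof (rule nn_integral_mono)
      fix t :: real
      show "indicator {s-1<..<s+1} t * ennreal (sqrt (1 - (t - s)\<^sup>2) ^ m) * emeasure ?M C1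
            \<le> emeasure ?M ((\<lambda>z. (z, t)) -` G)"
      proof (cases "t \<in> {s-1<..<s+1}")
        case True
        then have "\<bar>t - s\<bar> < 1" by auto
        then have lt: "(t - s)\<^sup>2 < 1" by (simp add: abs_square_less_1)
        define h where "h = sqrt (1 - (t - s)\<^sup>2)"
        have h: "0 < h" "h \<le> 1" using lt by (auto simp: h_def)
        have "ennreal (h ^ m) * emeasure ?M C1 \<le> emeasure ?M {z \<in> C1. dsq m z p \<le> h\<^sup>2 * 1}"
          by (rule star_slice[OF C1m starC1]) (use h in \<open>auto simp: C1_def\<close>)
        also have "\<dots> \<le> emeasure ?M ((\<lambda>z. (z, t)) -` G)"
        proof (rule emeasure_mono)
          show "{z \<in> C1. dsq m z p \<le> h\<^sup>2 * 1} \<subseteq> (\<lambda>z. (z, t)) -` G"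
            using lt Csp by (auto simp: C1_def G_def h_def space_pair_measure)
          show "(\<lambda>z. (z, t)) -` G \<in> sets ?M"
          proof -
            have "(\<lambda>z. (z, t)) -` G \<inter> space ?M \<in> sets ?M" using Gm by measurable
            moreover have "(\<lambda>z. (z, t)) -` G \<inter> space ?M = (\<lambda>z. (z, t)) -` G"
              by (auto simp: G_def space_pair_measure)
            ultimately show ?thesis by simp
          qed
        qed
        finally show ?thesis using True by (simp add: h_def)
      next
        case False
        then show ?thesis by simp
      qed
    qed
    also have "\<dots> = emeasure ?X G"
      using Gm by (rule emeasure_pair_measure_alt2[symmetric])
    finally show ?thesis .
  qed
  have c: "ennreal (Ball_Volume.unit_ball_vol (real (Suc m))) = ennreal (Ball_Volume.unit_ball_vol (real m)) * ?J"
    by (rule slice_J)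
  have "ennreal (Ball_Volume.unit_ball_vol (real (Suc m))) * ennreal ((1/\<rho>)^m) * emeasure ?M H
      = ennreal (Ball_Volume.unit_ball_vol (real (Suc m))) * (ennreal ((1/\<rho>)^m) * emeasure ?M H)"
    by (simp add: mult.assoc)
  also have "\<dots> \<le> ennreal (Ball_Volume.unit_ball_vol (real (Suc m))) * emeasure ?M C1"
    using a by (rule mult_left_mono) simp
  also have "\<dots> = ennreal (Ball_Volume.unit_ball_vol (real m)) * (emeasure ?M C1 * ?J)"
    unfolding c by (simp add: mult_ac)
  also have "\<dots> \<le> ennreal (Ball_Volume.unit_ball_vol (real m)) * emeasure ?X G"
    using b by (rule mult_left_mono) simp
  finally show ?thesis unfolding H_def G_def .
qed

definition ds :: "nat \<Rightarrow> (nat \<Rightarrow> real) \<Rightarrow> (nat \<Rightarrow> real) \<Rightarrow> real" where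
  "ds m z p = sqrt (dsq m z p)"

lemma ds_triangle: "ds m z q \<le> ds m z w + ds m w q"
proof -
  have "L2_set (\<lambda>i. (z i - w i) + (w i - q i)) {..<m} \<le> L2_set (\<lambda>i. z i - w i) {..<m} + L2_set (\<lambda>i. w i - q i) {..<m}"
    by (rule L2_set_triangle_ineq)
  then show ?thesis by (simp add: ds_def dsq_def L2_set_def)
qed

lemma ds_le_iff: "ds m z p \<le> ds m z q \<longleftrightarrow> dsq m z p \<le> dsq m z q"
  by (simp add: ds_def)

lemma ds_less_iff: "ds m z p < ds m z q \<longleftrightarrow> dsq m z p < dsq m z q"
  by (simp add: ds_def)

lemma ds_nonneg: "ds m z p \<ge> 0" by (simp add: ds_def dsq_nonneg)

lemma star_step:
  assumes le: "dsq m z p \<le> dsq m z q" and r: "0 < r" "r \<le> 1"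
  defines "z' \<equiv> (\<lambda>i\<in>{..<m}. p i + r * (z i - p i))"
  shows "dsq m z' p \<le> dsq m z' q" and "dsq m z p < dsq m z q \<Longrightarrow> dsq m z' p < dsq m z' q"
proof -
  have e1: "dsq m z' p = r\<^sup>2 * dsq m z p" unfolding z'_def by (rule dsq_scale)
  have d1: "ds m z' p = r * ds m z p" using e1 r by (simp add: ds_def real_sqrt_mult)
  have e2: "dsq m z z' = (1 - r)\<^sup>2 * dsq m z p"
    unfolding dsq_def z'_def by (simp add: sum_distrib_left power_mult_distrib[symmetric] algebra_simps)
  have d2: "ds m z z' = (1 - r) * ds m z p" using e2 r by (simp add: ds_def real_sqrt_mult)
  have tri: "ds m z q \<le> ds m z z' + ds m z' q" by (rule ds_triangle)
  have le': "ds m z p \<le> ds m z q" using le by (simp add: ds_le_iff)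
  show "dsq m z' p \<le> dsq m z' q"
    unfolding ds_le_iff[symmetric] using tri d1 d2 le' by (simp add: algebra_simps)
  assume "dsq m z p < dsq m z q"
  then have "ds m z p < ds m z q" by (simp add: ds_less_iff)
  then show "dsq m z' p < dsq m z' q"
    unfolding ds_less_iff[symmetric] using tri d1 d2 by (simp add: algebra_simps)
qed

definition cell :: "nat \<Rightarrow> nat \<Rightarrow> (nat \<Rightarrow> nat \<Rightarrow> real) \<Rightarrow> nat \<Rightarrow> (nat \<Rightarrow> real) set" where
  "cell m k p j = {z \<in> space (lebesgue_dim m). (\<forall>q<k. dsq m z (p j) \<le> dsq m z (p q)) \<and> (\<forall>q<j. dsq m z (p j) < dsq m z (p q))}"

lemma cell_sets[measurable]: "cell m k p j \<in> sets (lebesgue_dim m)"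
proof -
  have eq: "cell m k p j = {z \<in> space (lebesgue_dim m). (\<forall>q\<in>{..<k}. dsq m z (p j) \<le> dsq m z (p q)) \<and> (\<forall>q\<in>{..<j}. dsq m z (p j) < dsq m z (p q))}"
    by (auto simp: cell_def)
  have a: "{z \<in> space (lebesgue_dim m). dsq m z (p j) \<le> dsq m z (p q)} \<in> sets (lebesgue_dim m)" for q
    by (rule borel_measurable_le) (rule measurable_dsq)+
  have b: "{z \<in> space (lebesgue_dim m). dsq m z (p j) < dsq m z (p q)} \<in> sets (lebesgue_dim m)" for q
    by (rule borel_measurable_less) (rule measurable_dsq)+
  show ?thesis unfolding eq
    by (intro sets.sets_Collect_conj sets.sets_Collect_finite_All a b) auto
qed

lemma cell_disj:
  assumes "j < j'" "z \<in> cell m k p j" "z \<in> cell m k p j'" "j' < k"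
  shows False
proof -
  from assms have "dsq m z (p j') < dsq m z (p j)" unfolding cell_def by blast
  moreover from assms have "dsq m z (p j) \<le> dsq m z (p j')" unfolding cell_def by blast
  ultimately show False by linarith
qed

lemma cell_cover:
  assumes "k > 0" "z \<in> space (lebesgue_dim m)"
  shows "\<exists>j<k. z \<in> cell m k p j"
proof -
  let ?f = "\<lambda>q. dsq m z (p q)"
  have fin: "finite (?f ` {..<k})" "?f ` {..<k} \<noteq> {}" using assms by auto
  have "Min (?f ` {..<k}) \<in> ?f ` {..<k}" using Min_in[OF fin] .
  then obtain j0 where j0: "j0 < k" "?f j0 = Min (?f ` {..<k})"
    by (metis (no_types, lifting) imageE lessThan_iff)
  define P where "P j \<longleftrightarrow> j < k \<and> (\<forall>q<k. ?f j \<le> ?f q)" for j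
  have "\<forall>q<k. ?f j0 \<le> ?f q" using j0 fin by auto
  then have P0: "P j0" using j0 by (simp add: P_def)
  define j where "j = (LEAST j. P j)"
  have "P j" unfolding j_def by (rule LeastI[of P, OF P0])
  then have jP: "j < k \<and> (\<forall>q<k. ?f j \<le> ?f q)" by (simp add: P_def)
  have "\<forall>q<j. ?f j < ?f q"
  proof (intro allI impI)
    fix q assume q: "q < j"
    show "?f j < ?f q"
    proof (rule ccontr)
      assume "\<not> ?f j < ?f q"
      then have "P q" using jP q unfolding P_def by force
      then have "j \<le> q" unfolding j_def by (rule Least_le)
      with q show False by simp
    qed
  qed
  then show ?thesis using jP assms by (auto simp: cell_def)
qed

lemma cell_star:
  assumes z: "z \<in> cell m k p j" and r: "0 < r" "r \<le> 1"
  shows "(\<lambda>i\<in>{..<m}. p j i + r * (z i - p j i)) \<in> cell m k p j"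
proof -
  let ?z' = "(\<lambda>i\<in>{..<m}. p j i + r * (z i - p j i))"
  have sp: "?z' \<in> space (lebesgue_dim m)" by (simp add: space_PiM)
  have 1: "dsq m ?z' (p j) \<le> dsq m ?z' (p q)" if "q < k" for q
  proof -
    have "dsq m z (p j) \<le> dsq m z (p q)" using z that unfolding cell_def by blast
    then show ?thesis using star_step(1)[OF _ r] by blast
  qed
  have 2: "dsq m ?z' (p j) < dsq m ?z' (p q)" if "q < j" for q
  proof -
    have "dsq m z (p j) < dsq m z (p q)" using z that unfolding cell_def by blast
    then show ?thesis using star_step(2)[OF _ r] by (meson less_imp_le)
  qed
  show ?thesis using sp 1 2 unfolding cell_def by blast
qed

lemma finite_main:
  fixes p :: "nat \<Rightarrow> nat \<Rightarrow> real" and s :: "nat \<Rightarrow> real"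
  assumes k: "k > 0" and rho: "\<rho> \<ge> 1"
  shows "ennreal (Ball_Volume.unit_ball_vol (real (Suc m))) * ennreal ((1/\<rho>)^m) *
           emeasure (lebesgue_dim m) {z \<in> space (lebesgue_dim m). \<exists>j<k. dsq m z (p j) \<le> \<rho>\<^sup>2}
        \<le> ennreal (Ball_Volume.unit_ball_vol (real m)) * emeasure (lebesgue_dim m \<Otimes>\<^sub>M lborel)
           {x \<in> space (lebesgue_dim m \<Otimes>\<^sub>M lborel). \<exists>j<k. dsq m (fst x) (p j) + (snd x - s j)\<^sup>2 \<le> 1}"
proof -
  let ?M = "lebesgue_dim m"
  let ?X = "lebesgue_dim m \<Otimes>\<^sub>M lborel"
  let ?c1 = "ennreal (Ball_Volume.unit_ball_vol (real (Suc m))) * ennreal ((1/\<rho>)^m)"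
  let ?c2 = "ennreal (Ball_Volume.unit_ball_vol (real m))"
  define H where "H j = {z \<in> cell m k p j. dsq m z (p j) \<le> \<rho>\<^sup>2}" for j
  define G where "G j = {x \<in> space ?X. fst x \<in> cell m k p j \<and> dsq m (fst x) (p j) + (snd x - s j)\<^sup>2 \<le> 1}" for j
  have Hm: "H j \<in> sets ?M" for j
  proof -
    have eq: "H j = cell m k p j \<inter> {z \<in> space ?M. dsq m z (p j) \<le> \<rho>\<^sup>2}" unfolding H_def cell_def by blast
    have B: "{z \<in> space ?M. dsq m z (p j) \<le> \<rho>\<^sup>2} \<in> sets ?M" by measurable
    show ?thesis unfolding eq by (rule sets.Int[OF cell_sets B])
  qed
  have Gm: "G j \<in> sets ?X" for j
  proof -
    have eq: "G j = (fst -` cell m k p j \<inter> space ?X) \<inter> {x \<in> space ?X. dsq m (fst x) (p j) + (snd x - s j)\<^sup>2 \<le> 1}"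
      unfolding G_def by blast
    have B: "{x \<in> space ?X. dsq m (fst x) (p j) + (snd x - s j)\<^sup>2 \<le> 1} \<in> sets ?X" by measurable
    have A: "fst -` cell m k p j \<inter> space ?X \<in> sets ?X"
      by (rule measurable_sets[OF measurable_fst]) simp
    show ?thesis unfolding eq by (rule sets.Int[OF A B])
  qed
  have Q: "{z \<in> space ?M. \<exists>j<k. dsq m z (p j) \<le> \<rho>\<^sup>2} = (\<Union>j\<in>{..<k}. H j)"
  proof (rule equalityI; rule subsetI)
    fix z assume "z \<in> {z \<in> space ?M. \<exists>j<k. dsq m z (p j) \<le> \<rho>\<^sup>2}"
    then obtain j where z: "z \<in> space ?M" and j: "j < k" "dsq m z (p j) \<le> \<rho>\<^sup>2" by blast
    obtain j' where j': "j' < k" "z \<in> cell m k p j'" using cell_cover[OF k z] by blast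
    then have "dsq m z (p j') \<le> dsq m z (p j)" using j unfolding cell_def by blast
    then have "z \<in> H j'" using j j' unfolding H_def by simp
    then show "z \<in> (\<Union>j\<in>{..<k}. H j)" using j' by blast
  next
    fix z assume "z \<in> (\<Union>j\<in>{..<k}. H j)"
    then obtain j where j: "j < k" "z \<in> H j" by blast
    then have "z \<in> space ?M" "dsq m z (p j) \<le> \<rho>\<^sup>2" unfolding H_def cell_def by blast+
    then show "z \<in> {z \<in> space ?M. \<exists>j<k. dsq m z (p j) \<le> \<rho>\<^sup>2}" using j by blast
  qed
  have cd: "False" if "a < k" "b < k" "a \<noteq> b" "z \<in> cell m k p a" "z \<in> cell m k p b" for a b z
  proof (cases "a < b")
    case True then show ?thesis using cell_disj[of a b z m k p] that by blast
  next
    case False then have "b < a" using that by simp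
    then show ?thesis using cell_disj[of b a z m k p] that by blast
  qed
  have disjH: "disjoint_family_on H {..<k}"
    unfolding disjoint_family_on_def
  proof (intro ballI impI)
    fix a b assume ab: "a \<in> {..<k}" "b \<in> {..<k}" "a \<noteq> b"
    show "H a \<inter> H b = {}"
    proof (rule ccontr)
      assume "H a \<inter> H b \<noteq> {}"
      then obtain z where "z \<in> cell m k p a" "z \<in> cell m k p b" unfolding H_def by blast
      then show False using ab cd by blast
    qed
  qed
  have disjG: "disjoint_family_on G {..<k}"
    unfolding disjoint_family_on_def
  proof (intro ballI impI)
    fix a b assume ab: "a \<in> {..<k}" "b \<in> {..<k}" "a \<noteq> b"
    show "G a \<inter> G b = {}"
    proof (rule ccontr)
      assume "G a \<inter> G b \<noteq> {}"
      then obtain z where "z \<in> G a" "z \<in> G b" by blast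
      then have "fst z \<in> cell m k p a" "fst z \<in> cell m k p b" unfolding G_def by simp_all
      then show False using ab cd by blast
    qed
  qed
  have "?c1 * emeasure ?M {z \<in> space ?M. \<exists>j<k. dsq m z (p j) \<le> \<rho>\<^sup>2}
        = ?c1 * (\<Sum>j<k. emeasure ?M (H j))"
    unfolding Q by (subst sum_emeasure[symmetric]) (use Hm disjH in auto)
  also have "\<dots> = (\<Sum>j<k. ?c1 * emeasure ?M (H j))" by (simp add: sum_distrib_left)
  also have "\<dots> \<le> (\<Sum>j<k. ?c2 * emeasure ?X (G j))"
  proof (rule sum_mono)
    fix j assume "j \<in> {..<k}"
    show "?c1 * emeasure ?M (H j) \<le> ?c2 * emeasure ?X (G j)"
      unfolding H_def G_def
    proof (rule star_cell)
      show "cell m k p j \<in> sets ?M" by (rule cell_sets)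
      show "\<And>z r. z \<in> cell m k p j \<Longrightarrow> 0 < r \<Longrightarrow> r \<le> 1 \<Longrightarrow> (\<lambda>i\<in>{..<m}. p j i + r * (z i - p j i)) \<in> cell m k p j"
        by (rule cell_star)
      show "1 \<le> \<rho>" by (rule rho)
    qed
  qed
  also have "\<dots> = ?c2 * (\<Sum>j<k. emeasure ?X (G j))" by (simp only: sum_distrib_left)
  also have "\<dots> = ?c2 * emeasure ?X (\<Union>j\<in>{..<k}. G j)"
  proof -
    have "(\<Sum>j<k. emeasure ?X (G j)) = emeasure ?X (\<Union>j\<in>{..<k}. G j)"
      by (rule sum_emeasure) (use Gm disjG in auto)
    then show ?thesis by simp
  qed
  also have "\<dots> \<le> ?c2 * emeasure ?X {x \<in> space ?X. \<exists>j<k. dsq m (fst x) (p j) + (snd x - s j)\<^sup>2 \<le> 1}"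
  proof (rule mult_left_mono)
    show "emeasure ?X (\<Union>j\<in>{..<k}. G j) \<le> emeasure ?X {x \<in> space ?X. \<exists>j<k. dsq m (fst x) (p j) + (snd x - s j)\<^sup>2 \<le> 1}"
    proof (rule emeasure_mono)
      show "(\<Union>j\<in>{..<k}. G j) \<subseteq> {x \<in> space ?X. \<exists>j<k. dsq m (fst x) (p j) + (snd x - s j)\<^sup>2 \<le> 1}"
        unfolding G_def by blast
      show "{x \<in> space ?X. \<exists>j<k. dsq m (fst x) (p j) + (snd x - s j)\<^sup>2 \<le> 1} \<in> sets ?X"
        by measurable
    qed
  qed simp
  finally show ?thesis .
qed

lemma perp_onb_exists:
  fixes u :: "'a::euclidean_space"
  assumes u: "norm u = 1"
  shows "\<exists>b. perp_onb u b"
proof -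
  have "u \<noteq> 0" using u by auto
  obtain B where B: "B \<subseteq> {x. u \<bullet> x = 0}" "pairwise orthogonal B"
      "\<And>x. x \<in> B \<Longrightarrow> norm x = 1" "independent B" "card B = dim {x. u \<bullet> x = 0}"
    using orthonormal_basis_subspace[OF subspace_hyperplane[of u]] by metis
  have cB: "card B = DIM('a) - 1" using B(5) dim_hyperplane[OF \<open>u \<noteq> 0\<close>] by simp
  have fB: "finite B" using B(4) by (simp add: independent_imp_finite)
  obtain h where h: "bij_betw h {0..<card B} B" using ex_bij_betw_nat_finite[OF fB] by blast
  have "perp_onb u h"
    unfolding perp_onb_def
  proof (intro conjI allI impI)
    fix i assume i: "i < DIM('a) - 1"
    then have hi: "h i \<in> B" using h cB by (auto simp: bij_betw_def)
    show "h i \<bullet> u = 0" using B(1) hi by (auto simp: inner_commute)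
    show "norm (h i) = 1" using B(3) hi by simp
  next
    fix i j assume i: "i < DIM('a) - 1" and j: "j < DIM('a) - 1" and ij: "i \<noteq> j"
    have "h i \<noteq> h j" using h i j ij cB unfolding bij_betw_def inj_on_def by auto
    moreover have "h i \<in> B" "h j \<in> B" using h cB i j by (auto simp: bij_betw_def)
    ultimately show "h i \<bullet> h j = 0" using B(2) unfolding pairwise_def orthogonal_def by blast
  qed
  then show ?thesis by blast
qed

definition Lmap :: "nat \<Rightarrow> (nat \<Rightarrow> 'a::euclidean_space) \<Rightarrow> (nat \<Rightarrow> real) \<Rightarrow> 'a" where
  "Lmap m b y = (\<Sum>i<m. y i *\<^sub>R b i)"

definition Tmap :: "nat \<Rightarrow> (nat \<Rightarrow> 'a::euclidean_space) \<Rightarrow> 'a \<Rightarrow> (nat \<Rightarrow> real) \<times> real \<Rightarrow> 'a" where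
  "Tmap m b u x = Lmap m b (fst x) + snd x *\<^sub>R u"

locale onb_setup =
  fixes u :: "'a::euclidean_space" and b :: "nat \<Rightarrow> 'a" and m :: nat
  assumes u: "norm u = 1" and pb: "perp_onb u b" and m: "m = DIM('a) - 1"
begin

lemma bu: "i < m \<Longrightarrow> b i \<bullet> u = 0"
  using pb m unfolding perp_onb_def by auto

lemma ub: "i < m \<Longrightarrow> u \<bullet> b i = 0"
  using bu by (simp add: inner_commute)

lemma bb: "i < m \<Longrightarrow> j < m \<Longrightarrow> b i \<bullet> b j = (if i = j then 1 else 0)"
proof -
  assume i: "i < m" and j: "j < m"
  show ?thesis
  proof (cases "i = j")
    case True
    have "norm (b i) = 1" using pb m i unfolding perp_onb_def by auto
    then show ?thesis using True by (simp add: norm_eq_1)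
  next
    case False
    then show ?thesis using pb m i j unfolding perp_onb_def by auto
  qed
qed

lemma uu: "u \<bullet> u = 1"
  using u by (simp add: power2_norm_eq_inner[symmetric])

lemma Lmap_inner_b: "j < m \<Longrightarrow> Lmap m b y \<bullet> b j = y j"
proof -
  assume j: "j < m"
  have "Lmap m b y \<bullet> b j = (\<Sum>i<m. y i * (b i \<bullet> b j))"
    by (simp add: Lmap_def inner_sum_left)
  also have "\<dots> = (\<Sum>i<m. if i = j then y j else 0)"
    using j by (intro sum.cong) (auto simp: bb)
  also have "\<dots> = y j" using j by simp
  finally show ?thesis .
qed

lemma Lmap_inner_u: "Lmap m b y \<bullet> u = 0"
  by (simp add: Lmap_def inner_sum_left bu)

lemma Lmap_diff: "Lmap m b y - Lmap m b y' = Lmap m b (\<lambda>i. y i - y' i)"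
  by (simp add: Lmap_def sum_subtractf[symmetric] scaleR_diff_left)

lemma norm_Lmap_u: "(norm (Lmap m b w + c *\<^sub>R u))\<^sup>2 = (\<Sum>i<m. (w i)\<^sup>2) + c\<^sup>2"
proof -
  have "Lmap m b w \<bullet> Lmap m b w = (\<Sum>i<m. w i * (Lmap m b w \<bullet> b i))"
    by (simp add: Lmap_def inner_sum_right)
  also have "\<dots> = (\<Sum>i<m. (w i)\<^sup>2)"
    by (intro sum.cong) (auto simp: Lmap_inner_b power2_eq_square)
  finally have 1: "Lmap m b w \<bullet> Lmap m b w = (\<Sum>i<m. (w i)\<^sup>2)" .
  have "(norm (Lmap m b w + c *\<^sub>R u))\<^sup>2 = (Lmap m b w + c *\<^sub>R u) \<bullet> (Lmap m b w + c *\<^sub>R u)"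
    by (simp add: power2_norm_eq_inner)
  also have "\<dots> = Lmap m b w \<bullet> Lmap m b w + 2 * c * (Lmap m b w \<bullet> u) + c\<^sup>2 * (u \<bullet> u)"
    by (simp add: inner_add_left inner_add_right inner_commute power2_eq_square algebra_simps)
  finally show ?thesis using 1 by (simp add: Lmap_inner_u uu)
qed

lemma norm_Tmap_diff:
  "(norm (Tmap m b u x - Tmap m b u x'))\<^sup>2 = dsq m (fst x) (fst x') + (snd x - snd x')\<^sup>2"
proof -
  have "Tmap m b u x - Tmap m b u x' = Lmap m b (\<lambda>i. fst x i - fst x' i) + (snd x - snd x') *\<^sub>R u"
    by (simp add: Tmap_def Lmap_diff[symmetric] algebra_simps)
  then show ?thesis by (simp add: norm_Lmap_u dsq_def)
qed

lemma span_all: "span (insert u (b ` {..<m})) = UNIV"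
proof -
  let ?B = "insert u (b ` {..<m})"
  have injb: "inj_on b {..<m}"
    unfolding inj_on_def using bb by (metis lessThan_iff zero_neq_one)
  have ub_notin: "u \<notin> b ` {..<m}"
    using bu uu by (auto simp: inner_commute)
  have card: "card ?B = DIM('a)"
    using injb ub_notin m by (simp add: card_image)
  have po: "pairwise orthogonal ?B"
    unfolding pairwise_def orthogonal_def
    using bu ub bb by (auto simp: inner_commute)
  have n0: "0 \<notin> ?B" using uu bb by (auto) (metis inner_zero_left zero_neq_one)
  have ind: "independent ?B" by (rule pairwise_orthogonal_independent[OF po n0])
  have "UNIV \<subseteq> span ?B"
    by (rule card_ge_dim_independent) (use ind card in auto)
  then show ?thesis by auto
qed

lemma repr: "x = Tmap m b u (\<lambda>i\<in>{..<m}. x \<bullet> b i, x \<bullet> u)"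
proof -
  define w where "w = x - Tmap m b u (\<lambda>i\<in>{..<m}. x \<bullet> b i, x \<bullet> u)"
  have Lb: "Lmap m b (\<lambda>i\<in>{..<m}. x \<bullet> b i) \<bullet> b j = x \<bullet> b j" if "j < m" for j
    using Lmap_inner_b[OF that] that by simp
  have o: "orthogonal w y" if "y \<in> insert u (b ` {..<m})" for y
    using that unfolding orthogonal_def w_def Tmap_def
    by (auto simp: inner_diff_left inner_add_left Lmap_inner_u uu Lb bu ub)
  have "w \<in> span (insert u (b ` {..<m}))" by (simp add: span_all)
  then have "orthogonal w w" using o by (rule orthogonal_to_span)
  then have "w = 0" by (simp add: orthogonal_self)
  then show ?thesis by (simp add: w_def)
qed

lemma proj_Tmap: "proj_perp u (Tmap m b u x) = Lmap m b (fst x)"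
  by (simp add: proj_perp_def Tmap_def inner_add_left Lmap_inner_u uu)

lemma proj_Lmap: "proj_perp u (Lmap m b y) = Lmap m b y"
  by (simp add: proj_perp_def Lmap_inner_u)

lemma norm_proj_le: "norm (proj_perp u x) \<le> norm x"
proof -
  have "(norm x)\<^sup>2 = (norm (proj_perp u x))\<^sup>2 + (x \<bullet> u)\<^sup>2"
  proof -
    have "x = proj_perp u x + (x \<bullet> u) *\<^sub>R u" by (simp add: proj_perp_def)
    moreover have "proj_perp u x \<bullet> u = 0" by (simp add: proj_perp_def inner_diff_left uu)
    ultimately have "x \<bullet> x = proj_perp u x \<bullet> proj_perp u x + (x \<bullet> u)\<^sup>2"
      by (metis (no_types, lifting) inner_add_left inner_add_right inner_commute inner_scaleR_left inner_scaleR_right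
          mult.right_neutral power2_eq_square uu add_0 mult_zero_right add.commute)
    then show ?thesis by (simp add: power2_norm_eq_inner)
  qed
  then have "(norm (proj_perp u x))\<^sup>2 \<le> (norm x)\<^sup>2" by simp
  then show ?thesis by (rule power2_le_imp_le) simp
qed

end

lemma emeasure_UN_countable_le:
  assumes I: "countable I" and X: "\<And>i. i \<in> I \<Longrightarrow> X i \<in> sets M"
  shows "emeasure M (\<Union>i\<in>I. X i) \<le> (\<integral>\<^sup>+i. emeasure M (X i) \<partial>count_space I)"
proof -
  have U: "(\<Union>i\<in>I. X i) \<in> sets M" using I X by (intro sets.countable_UN') auto
  have "emeasure M (\<Union>i\<in>I. X i) = (\<integral>\<^sup>+x. indicator (\<Union>i\<in>I. X i) x \<partial>M)"
    using U by simp
  also have "\<dots> \<le> (\<integral>\<^sup>+x. (\<integral>\<^sup>+i. indicator (X i) x \<partial>count_space I) \<partial>M)"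
  proof (rule nn_integral_mono)
    fix x
    show "indicator (\<Union>i\<in>I. X i) x \<le> (\<integral>\<^sup>+i. indicator (X i) x \<partial>count_space I)"
    proof (cases "x \<in> (\<Union>i\<in>I. X i)")
      case True
      then obtain j where j: "j \<in> I" "x \<in> X j" by blast
      have "indicator (\<Union>i\<in>I. X i) x = (indicator (X j) x :: ennreal)" using True j by simp
      also have "\<dots> \<le> (\<integral>\<^sup>+i. indicator (X i) x \<partial>count_space I)"
        by (rule nn_integral_ge_point[OF j(1)])
      finally show ?thesis .
    qed simp
  qed
  also have "\<dots> = (\<integral>\<^sup>+i. (\<integral>\<^sup>+x. indicator (X i) x \<partial>M) \<partial>count_space I)"
    by (rule nn_integral_count_space_nn_integral[OF I]) (use X in auto)
  also have "\<dots> = (\<integral>\<^sup>+i. emeasure M (X i) \<partial>count_space I)"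
    by (intro nn_integral_cong) (use X in auto)
  finally show ?thesis .
qed

context onb_setup
begin

abbreviation "XX \<equiv> lebesgue_dim m \<Otimes>\<^sub>M lborel"

lemma DIM_eq: "DIM('a) = Suc m" using m DIM_positive[where 'a='a] by simp

lemma Tmap_meas[measurable]: "Tmap m b u \<in> XX \<rightarrow>\<^sub>M borel"
  unfolding Tmap_def Lmap_def by measurable

lemma nu_cball:
  assumes r: "r > 0"
  shows "emeasure (distr XX borel (Tmap m b u)) (cball c r) = emeasure lborel (cball c r)"
proof -
  define c0 where "c0 = ((\<lambda>i\<in>{..<m}. c \<bullet> b i), c \<bullet> u)"
  have c: "c = Tmap m b u c0" unfolding c0_def by (rule repr)
  have "Tmap m b u -` cball c r \<inter> space XX
        = {x \<in> space XX. dsq m (fst x) (fst c0) + (snd x - snd c0)\<^sup>2 \<le> r\<^sup>2}"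
  proof -
    have "dist c (Tmap m b u x) \<le> r \<longleftrightarrow> dsq m (fst x) (fst c0) + (snd x - snd c0)\<^sup>2 \<le> r\<^sup>2" for x
    proof -
      have "dist c (Tmap m b u x) = norm (Tmap m b u x - Tmap m b u c0)"
        using c by (simp add: dist_norm norm_minus_commute)
      then have "(dist c (Tmap m b u x))\<^sup>2 = dsq m (fst x) (fst c0) + (snd x - snd c0)\<^sup>2"
        by (simp add: norm_Tmap_diff)
      moreover have "dist c (Tmap m b u x) \<le> r \<longleftrightarrow> (dist c (Tmap m b u x))\<^sup>2 \<le> r\<^sup>2"
        using r power2_le_iff_abs_le[of r "dist c (Tmap m b u x)"] by simp
      ultimately show ?thesis by simp
    qed
    then show ?thesis by auto
  qed
  then have "emeasure (distr XX borel (Tmap m b u)) (cball c r)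
      = emeasure XX {x \<in> space XX. dsq m (fst x) (fst c0) + (snd x - snd c0)\<^sup>2 \<le> r\<^sup>2}"
    by (simp add: emeasure_distr)
  also have "\<dots> = ennreal (Ball_Volume.unit_ball_vol (real (Suc m)) * r ^ Suc m)"
    by (rule X_ball[OF r])
  also have "\<dots> = emeasure lborel (cball c r)"
    using r by (simp add: emeasure_cball DIM_eq)
  finally show ?thesis .
qed

abbreviation "nu \<equiv> distr XX borel (Tmap m b u)"

lemma sets_nu[simp]: "sets nu = sets borel" by simp

lemma cball_scale5:
  assumes "r \<ge> 0"
  shows "emeasure lborel (cball (x::'a) (5 * r)) = ennreal (5 ^ DIM('a)) * emeasure lborel (cball x r)"
proof -
  have "emeasure lborel (cball (x::'a) (5 * r)) = ennreal (Ball_Volume.unit_ball_vol (real DIM('a)) * (5 * r) ^ DIM('a))"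
    using assms by (simp add: emeasure_cball)
  also have "\<dots> = ennreal (5 ^ DIM('a) * (Ball_Volume.unit_ball_vol (real DIM('a)) * r ^ DIM('a)))"
    by (simp add: power_mult_distrib mult_ac)
  also have "\<dots> = ennreal (5 ^ DIM('a)) * ennreal (Ball_Volume.unit_ball_vol (real DIM('a)) * r ^ DIM('a))"
    using assms by (intro ennreal_mult) auto
  also have "\<dots> = ennreal (5 ^ DIM('a)) * emeasure lborel (cball x r)"
    using assms by (simp add: emeasure_cball)
  finally show ?thesis .
qed

lemma nu_null:
  assumes N: "N \<in> sets borel" and N0: "emeasure lborel N = 0"
  shows "emeasure nu N = 0"
proof -
  have key: "emeasure nu N \<le> ennreal (5 ^ DIM('a)) * ennreal e" if e: "e > 0" for e
  proof -
    have Nl: "N \<in> sets lebesgue" using N by simp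
    obtain U where U: "open U" "N \<subseteq> U" "(U - N) \<in> lmeasurable" "emeasure lebesgue (U - N) < ennreal e"
      using sets_lebesgue_outer_open[OF Nl e] by blast
    have Ub: "U \<in> sets borel" using U(1) by simp
    have UN: "U = N \<union> (U - N)" using U(2) by blast
    have "emeasure lborel U \<le> emeasure lborel N + emeasure lborel (U - N)"
      by (subst UN) (rule emeasure_subadditive, use N Ub in auto)
    also have "emeasure lborel (U - N) = emeasure lebesgue (U - N)"
      using N Ub by simp
    finally have lU: "emeasure lborel U \<le> ennreal e" using N0 U(4) by simp
    have "\<forall>x\<in>N. \<exists>r>0. cball x r \<subseteq> U" using U(1,2) open_contains_cball by blast
    then obtain r where r: "\<And>x. x \<in> N \<Longrightarrow> r x > 0 \<and> cball x (r x) \<subseteq> U" by metis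
    define r' where "r' x = min 1 (r x)" for x
    have r'pos: "x \<in> N \<Longrightarrow> 0 < r' x \<and> r' x \<le> 1" for x using r[of x] by (auto simp: r'_def)
    have r'U: "x \<in> N \<Longrightarrow> cball x (r' x) \<subseteq> U" for x
      using r[of x] by (auto simp: r'_def)
    have cov: "N \<subseteq> (\<Union>x\<in>N. cball x (r' x))" using r'pos by force
    obtain C where C: "countable C" "C \<subseteq> N"
       "pairwise (\<lambda>i j. disjnt (cball i (r' i)) (cball j (r' j))) C"
       "N \<subseteq> (\<Union>i\<in>C. cball i (5 * r' i))"
      using Vitali_covering_lemma_cballs[where S=N and K=N and a="\<lambda>x. x" and r=r' and B=1, OF cov r'pos] by blast
    have "emeasure nu N \<le> emeasure nu (\<Union>i\<in>C. cball i (5 * r' i))"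
    proof (rule emeasure_mono[OF C(4)])
      have "(\<Union>i\<in>C. cball i (5 * r' i)) \<in> sets borel"
        using C(1) by (intro sets.countable_UN') auto
      then show "(\<Union>i\<in>C. cball i (5 * r' i)) \<in> sets nu" by simp
    qed
    also have "\<dots> \<le> (\<integral>\<^sup>+i. emeasure nu (cball i (5 * r' i)) \<partial>count_space C)"
      by (rule emeasure_UN_countable_le[OF C(1)]) simp
    also have "\<dots> = (\<integral>\<^sup>+i. ennreal (5 ^ DIM('a)) * emeasure lborel (cball i (r' i)) \<partial>count_space C)"
    proof (rule nn_integral_cong)
      fix i assume "i \<in> space (count_space C)"
      then have i: "i \<in> N" using C(2) by auto
      have "0 < 5 * r' i" using r'pos[OF i] by simp
      then have "emeasure nu (cball i (5 * r' i)) = emeasure lborel (cball i (5 * r' i))"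
        by (rule nu_cball)
      also have "\<dots> = ennreal (5 ^ DIM('a)) * emeasure lborel (cball i (r' i))"
        using r'pos[OF i] by (intro cball_scale5) simp
      finally show "emeasure nu (cball i (5 * r' i)) = ennreal (5 ^ DIM('a)) * emeasure lborel (cball i (r' i))" .
    qed
    also have "\<dots> = ennreal (5 ^ DIM('a)) * (\<integral>\<^sup>+i. emeasure lborel (cball i (r' i)) \<partial>count_space C)"
      by (rule nn_integral_cmult) simp
    also have "(\<integral>\<^sup>+i. emeasure lborel (cball i (r' i)) \<partial>count_space C) = emeasure lborel (\<Union>i\<in>C. cball i (r' i))"
    proof (rule emeasure_UN_countable[symmetric])
      show "disjoint_family_on (\<lambda>i. cball i (r' i)) C"
        using C(3) unfolding disjoint_family_on_def pairwise_def disjnt_def by blast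
    qed (use C(1) in auto)
    also have "emeasure lborel (\<Union>i\<in>C. cball i (r' i)) \<le> emeasure lborel U"
    proof (rule emeasure_mono)
      show "(\<Union>i\<in>C. cball i (r' i)) \<subseteq> U" using C(2) r'U by blast
    qed (use Ub in simp)
    finally have "emeasure nu N \<le> ennreal (5 ^ DIM('a)) * emeasure lborel U"
      by (simp add: mult_left_mono)
    also have "\<dots> \<le> ennreal (5 ^ DIM('a)) * ennreal e"
      using lU by (rule mult_left_mono) simp
    finally show ?thesis .
  qed
  have "emeasure nu N \<le> 0"
  proof (rule ennreal_le_epsilon)
    fix e :: real assume e: "0 < e"
    have "emeasure nu N \<le> ennreal (5 ^ DIM('a)) * ennreal (e / 5 ^ DIM('a))"
      using key[of "e / 5 ^ DIM('a)"] e by simp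
    also have "\<dots> = ennreal e"
      using e by (subst ennreal_mult[symmetric]) auto
    finally show "emeasure nu N \<le> 0 + ennreal e" by simp
  qed
  then show ?thesis by simp
qed

lemma nu_open:
  assumes U: "open U"
  shows "emeasure nu U = emeasure lborel U"
proof -
  define K where "K = {i :: 'a \<times> real. snd i > 0 \<and> cball (fst i) (snd i) \<subseteq> U}"
  have Kr: "\<And>i. i \<in> K \<Longrightarrow> 0 < snd i" by (auto simp: K_def)
  have KS: "\<exists>i. i \<in> K \<and> x \<in> cball (fst i) (snd i) \<and> snd i < d" if "x \<in> U" "0 < d" for x d
  proof -
    obtain e where e: "e > 0" "cball x e \<subseteq> U" using U \<open>x \<in> U\<close> open_contains_cball by blast
    define \<rho> where "\<rho> = min e (d/2)"
    have "\<rho> > 0" "\<rho> < d" "cball x \<rho> \<subseteq> U" using e \<open>0 < d\<close> by (auto simp: \<rho>_def)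
    then show ?thesis by (intro exI[of _ "(x, \<rho>)"]) (auto simp: K_def)
  qed
  obtain C where C: "countable C" "C \<subseteq> K"
     "pairwise (\<lambda>i j. disjnt (cball (fst i) (snd i)) (cball (fst j) (snd j))) C"
     "negligible (U - (\<Union>i\<in>C. cball (fst i) (snd i)))"
    using Vitali_covering_theorem_cballs[where K=K and S=U and a=fst and r=snd, OF Kr KS] by blast
  define W where "W = (\<Union>i\<in>C. cball (fst i) (snd i))"
  have Wb: "W \<in> sets borel" unfolding W_def using C(1) by (intro sets.countable_UN') auto
  have WU: "W \<subseteq> U" using C(2) by (auto simp: W_def K_def)
  have Ub: "U \<in> sets borel" using U by simp
  have Db: "U - W \<in> sets borel" using Ub Wb by simp
  have "U - W \<in> null_sets lebesgue" using C(4) by (simp add: W_def negligible_iff_null_sets)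
  then have "U - W \<in> null_sets lborel" using Db null_sets_completion_iff[of "U - W" lborel] by simp
  then have D0: "emeasure lborel (U - W) = 0" by auto
  have D0': "emeasure nu (U - W) = 0" by (rule nu_null[OF Db D0])
  have disj: "disjoint_family_on (\<lambda>i. cball (fst i) (snd i)) C"
    using C(3) unfolding disjoint_family_on_def pairwise_def disjnt_def by blast
  have "emeasure nu W = (\<integral>\<^sup>+i. emeasure nu (cball (fst i) (snd i)) \<partial>count_space C)"
    unfolding W_def by (rule emeasure_UN_countable) (use C(1) disj in auto)
  also have "\<dots> = (\<integral>\<^sup>+i. emeasure lborel (cball (fst i) (snd i)) \<partial>count_space C)"
  proof (rule nn_integral_cong)
    fix i assume "i \<in> space (count_space C)"
    then have "i \<in> K" using C(2) by auto
    then have "snd i > 0" by (rule Kr)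
    then show "emeasure nu (cball (fst i) (snd i)) = emeasure lborel (cball (fst i) (snd i))"
      by (rule nu_cball)
  qed
  also have "\<dots> = emeasure lborel W"
    unfolding W_def by (rule emeasure_UN_countable[symmetric]) (use C(1) disj in auto)
  finally have eqW: "emeasure nu W = emeasure lborel W" .
  have UWD: "U = W \<union> (U - W)" using WU by blast
  have "emeasure nu U = emeasure nu W + emeasure nu (U - W)"
    by (subst UWD, rule plus_emeasure[symmetric]) (use Wb Db in auto)
  also have "\<dots> = emeasure lborel W + emeasure lborel (U - W)" using eqW D0 D0' by simp
  also have "\<dots> = emeasure lborel (W \<union> (U - W))"
    by (rule plus_emeasure) (use Wb Db in auto)
  also have "\<dots> = emeasure lborel U" using UWD by simp
  finally show ?thesis .
qed

lemma nu_eq: "nu = lborel"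
proof (rule measure_eqI_generator_eq[where E="{S. open S}" and \<Omega>=UNIV and A="\<lambda>i. ball 0 (real i)"])
  show "Int_stable {S :: 'a set. open S}" by (auto simp: Int_stable_def)
  show "{S :: 'a set. open S} \<subseteq> Pow UNIV" by simp
  show "\<And>X. X \<in> {S. open S} \<Longrightarrow> emeasure nu X = emeasure lborel X" using nu_open by simp
  show "sets nu = sigma_sets UNIV {S. open S}" by (simp add: sets_borel)
  show "sets lborel = sigma_sets UNIV {S :: 'a set. open S}" by (simp add: sets_borel)
  show "range (\<lambda>i. ball 0 (real i)) \<subseteq> {S :: 'a set. open S}" by auto
  show "(\<Union>i. ball (0::'a) (real i)) = UNIV"
  proof (intro set_eqI iffI)
    fix x :: 'a
    obtain n where "norm x < real n" using reals_Archimedean2 by blast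
    then show "x \<in> (\<Union>i. ball (0::'a) (real i))" by auto
  qed auto
  show "emeasure nu (ball 0 (real i)) \<noteq> \<infinity>" for i
    using nu_open[of "ball 0 (real i)"] emeasure_lborel_ball_finite[of "0::'a" "real i"] by simp
qed

lemma iso:
  assumes S: "S \<in> sets borel"
  shows "emeasure lborel S = emeasure XX (Tmap m b u -` S \<inter> space XX)"
proof -
  have "emeasure lborel S = emeasure nu S" by (simp add: nu_eq)
  also have "\<dots> = emeasure XX (Tmap m b u -` S \<inter> space XX)"
    using S by (simp add: emeasure_distr)
  finally show ?thesis .
qed

end

context onb_setup
begin

lemma Lmap_meas[measurable]: "Lmap m b \<in> lebesgue_dim m \<rightarrow>\<^sub>M borel"
  unfolding Lmap_def by measurable

lemma norm_Lmap_diff_sq: "(norm (Lmap m b y - Lmap m b p))\<^sup>2 = dsq m y p"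
  using norm_Lmap_u[of "\<lambda>i. y i - p i" 0] by (simp add: Lmap_diff dsq_def)

lemma proj_linear: "proj_perp u (x + w) - proj_perp u z = proj_perp u (x + w - z)"
  by (simp add: proj_perp_def inner_diff_left inner_add_left algebra_simps)

lemma step_rho:
  assumes K: "compact K" "K \<noteq> {}" and rho: "\<rho> > 1"
  shows "ennreal (Ball_Volume.unit_ball_vol (real (Suc m))) * ennreal ((1/\<rho>)^m) *
           emeasure (lebesgue_dim m) {y \<in> space (lebesgue_dim m). Lmap m b y \<in> proj_perp u ` minkowski_sum K (cball 0 1)}
         \<le> ennreal (Ball_Volume.unit_ball_vol (real m)) * emeasure lborel (minkowski_sum K (cball 0 1))"
proof -
  let ?M = "lebesgue_dim m"
  define E0 where "E0 = minkowski_sum K (cball (0::'a) 1)"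
  define \<delta> where "\<delta> = \<rho> - 1"
  have \<delta>: "\<delta> > 0" using rho by (simp add: \<delta>_def)
  obtain F where F: "F \<subseteq> K" "finite F" "K \<subseteq> (\<Union>x\<in>F. ball x \<delta>)"
  proof (rule compactE_image[OF K(1), of K "\<lambda>x. ball x \<delta>"])
    show "K \<subseteq> (\<Union>x\<in>K. ball x \<delta>)" using \<delta> by auto
  qed auto
  have Fne: "F \<noteq> {}" using F(3) K(2) by auto
  define k where "k = card F"
  have k: "k > 0" using Fne F(2) by (simp add: k_def card_gt_0_iff)
  obtain xs where xs: "bij_betw xs {0..<k} F" using ex_bij_betw_nat_finite[OF F(2)] k_def by blast
  have xsF: "j < k \<Longrightarrow> xs j \<in> F" for j using xs by (auto simp: bij_betw_def)
  have Fxs: "f \<in> F \<Longrightarrow> \<exists>j<k. f = xs j" for f using xs by (force simp: bij_betw_def)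
  define p where "p j = (\<lambda>i\<in>{..<m}. xs j \<bullet> b i)" for j
  define s where "s j = xs j \<bullet> u" for j
  have xs_eq: "xs j = Tmap m b u (p j, s j)" for j unfolding p_def s_def by (rule repr)
  define E1 where "E1 = minkowski_sum F (cball (0::'a) 1)"
  have E1c: "compact E1" unfolding E1_def minkowski_sum_def
    by (rule compact_sums) (use F(2) in \<open>auto intro: finite_imp_compact\<close>)
  have E0c: "compact E0" unfolding E0_def minkowski_sum_def
    by (rule compact_sums) (use K in auto)
  have E1b: "E1 \<in> sets borel" using E1c by (simp add: compact_imp_closed borel_closed)
  have E0b: "E0 \<in> sets borel" using E0c by (simp add: compact_imp_closed borel_closed)
  have E1E0: "E1 \<subseteq> E0" using F(1) unfolding E1_def E0_def minkowski_sum_def by blast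
  define Eset where "Eset = {x \<in> space XX. \<exists>j<k. dsq m (fst x) (p j) + (snd x - s j)\<^sup>2 \<le> 1}"
  have memE1: "Tmap m b u x \<in> E1 \<longleftrightarrow> (\<exists>j<k. dsq m (fst x) (p j) + (snd x - s j)\<^sup>2 \<le> 1)" for x
  proof -
    have n: "norm (Tmap m b u x - xs j) \<le> 1 \<longleftrightarrow> dsq m (fst x) (p j) + (snd x - s j)\<^sup>2 \<le> 1" for j
    proof -
      have "(norm (Tmap m b u x - xs j))\<^sup>2 = dsq m (fst x) (p j) + (snd x - s j)\<^sup>2"
        unfolding xs_eq by (simp add: norm_Tmap_diff)
      moreover have "norm (Tmap m b u x - xs j) \<le> 1 \<longleftrightarrow> (norm (Tmap m b u x - xs j))\<^sup>2 \<le> 1"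
        by (simp add: power_le_one_iff)
      ultimately show ?thesis by simp
    qed
    have "Tmap m b u x \<in> E1 \<longleftrightarrow> (\<exists>j<k. norm (Tmap m b u x - xs j) \<le> 1)"
    proof
      assume "Tmap m b u x \<in> E1"
      then obtain f w where fw: "f \<in> F" "norm w \<le> 1" "Tmap m b u x = f + w"
        unfolding E1_def minkowski_sum_def by auto
      obtain j where j: "j < k" "f = xs j" using Fxs[OF fw(1)] by blast
      show "\<exists>j<k. norm (Tmap m b u x - xs j) \<le> 1" using fw j by (intro exI[of _ j]) auto
    next
      assume "\<exists>j<k. norm (Tmap m b u x - xs j) \<le> 1"
      then obtain j where j: "j < k" "norm (Tmap m b u x - xs j) \<le> 1" by blast
      have "Tmap m b u x = xs j + (Tmap m b u x - xs j)" by simp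
      then show "Tmap m b u x \<in> E1" unfolding E1_def minkowski_sum_def
        using xsF[OF j(1)] j(2) by fastforce
    qed
    then show ?thesis using n by simp
  qed
  have pre: "Tmap m b u -` E1 \<inter> space XX = Eset"
    unfolding Eset_def using memE1 by auto
  have "emeasure lborel E1 = emeasure XX Eset" using iso[OF E1b] pre by simp
  define Q where "Q = {z \<in> space ?M. \<exists>j<k. dsq m z (p j) \<le> \<rho>\<^sup>2}"
  have Qm: "Q \<in> sets ?M" unfolding Q_def by measurable
  have AQ: "{y \<in> space ?M. Lmap m b y \<in> proj_perp u ` E0} \<subseteq> Q"
  proof (rule subsetI)
    fix y assume "y \<in> {y \<in> space ?M. Lmap m b y \<in> proj_perp u ` E0}"
    then have y: "y \<in> space ?M" and "Lmap m b y \<in> proj_perp u ` E0" by auto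
    then obtain x w where xw: "x \<in> K" "norm w \<le> 1" "Lmap m b y = proj_perp u (x + w)"
      unfolding E0_def minkowski_sum_def by auto
    obtain f where f: "f \<in> F" "dist f x < \<delta>" using F(3) xw(1) by auto
    obtain j where j: "j < k" "f = xs j" using Fxs[OF f(1)] by blast
    have pj: "proj_perp u (xs j) = Lmap m b (p j)" unfolding xs_eq by (simp add: proj_Tmap)
    have "Lmap m b y - Lmap m b (p j) = proj_perp u (x + w - xs j)"
      using xw(3) pj proj_linear[of x w "xs j"] by simp
    then have "norm (Lmap m b y - Lmap m b (p j)) \<le> norm (x + w - xs j)"
      using norm_proj_le by simp
    also have "\<dots> \<le> norm (x - xs j) + norm w"
      by (metis add_diff_eq diff_add_eq norm_triangle_ineq)
    also have "\<dots> \<le> \<delta> + 1" using f j xw(2) by (simp add: dist_norm norm_minus_commute)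
    finally have le: "norm (Lmap m b y - Lmap m b (p j)) \<le> \<rho>" by (simp add: \<delta>_def)
    have "dsq m y (p j) = (norm (Lmap m b y - Lmap m b (p j)))\<^sup>2" by (simp add: norm_Lmap_diff_sq)
    also have "\<dots> \<le> \<rho>\<^sup>2" using le by (intro power_mono) auto
    finally show "y \<in> Q" unfolding Q_def using y j by blast
  qed
  have "ennreal (Ball_Volume.unit_ball_vol (real (Suc m))) * ennreal ((1/\<rho>)^m) *
           emeasure ?M {y \<in> space ?M. Lmap m b y \<in> proj_perp u ` E0}
        \<le> ennreal (Ball_Volume.unit_ball_vol (real (Suc m))) * ennreal ((1/\<rho>)^m) * emeasure ?M Q"
    by (intro mult_left_mono emeasure_mono AQ Qm) simp
  also have "\<dots> \<le> ennreal (Ball_Volume.unit_ball_vol (real m)) * emeasure XX Eset"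
    unfolding Q_def Eset_def by (rule finite_main[OF k]) (use rho in simp)
  also have "\<dots> = ennreal (Ball_Volume.unit_ball_vol (real m)) * emeasure lborel E1"
    using \<open>emeasure lborel E1 = emeasure XX Eset\<close> by simp
  also have "\<dots> \<le> ennreal (Ball_Volume.unit_ball_vol (real m)) * emeasure lborel E0"
    by (intro mult_left_mono emeasure_mono E1E0) (use E0b in simp_all)
  finally show ?thesis unfolding E0_def .
qed

end

theorem theorem4p15:
  fixes K :: "'a::euclidean_space set" and u :: 'a
  assumes "compact K" and "K \<noteq> {}" and "norm u = 1"
  shows "measure lebesgue (minkowski_sum K (cball 0 1))
           / hyperplane_vol u (proj_perp u ` minkowski_sum K (cball 0 1))
         \<ge> measure lebesgue (cball (0::'a) 1) / unit_ball_vol (DIM('a) - 1)"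
proof -
  define m where "m = DIM('a) - 1"
  define b where "b = (SOME b. perp_onb u b)"
  have pb: "perp_onb u b" unfolding b_def using perp_onb_exists[OF assms(3)] by (rule someI_ex)
  interpret onb_setup u b m using assms(3) pb by unfold_locales (simp_all add: m_def)
  let ?M = "lebesgue_dim m"
  let ?BVm = "Ball_Volume.unit_ball_vol (real m)"
  let ?BVn = "Ball_Volume.unit_ball_vol (real (Suc m))"
  define E0 where "E0 = minkowski_sum K (cball (0::'a) 1)"
  define A0 where "A0 = {y \<in> space ?M. Lmap m b y \<in> proj_perp u ` E0}"
  have hv: "hyperplane_vol u (proj_perp u ` E0) = measure ?M A0"
    unfolding hyperplane_vol_def Let_def A0_def b_def[symmetric] m_def[symmetric] Lmap_def
    by (simp add: space_PiM)
  have ubv: "unit_ball_vol (DIM('a) - 1) = ?BVm"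
  proof -
    have "{y \<in> PiE {..<m} (\<lambda>_. UNIV). (\<Sum>i<m. (y i)\<^sup>2) \<le> 1} = {z \<in> space ?M. dsq m z (\<lambda>_. 0) \<le> 1\<^sup>2}"
      by (simp add: dsq_def space_PiM)
    then have "unit_ball_vol (DIM('a) - 1) = measure ?M {z \<in> space ?M. dsq m z (\<lambda>_. 0) \<le> 1\<^sup>2}"
      unfolding unit_ball_vol_def m_def[symmetric] by simp
    also have "\<dots> = ?BVm"
      using M_ball[of 1 m "\<lambda>_. 0"] by (simp add: measure_def)
    finally show ?thesis .
  qed
  have ball: "measure lebesgue (cball (0::'a) 1) = ?BVn"
    using content_cball[of 1 "0::'a"] DIM_eq by simp
  have E0c: "compact E0" unfolding E0_def minkowski_sum_def
    by (rule compact_sums) (use assms in auto)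
  have E0b: "E0 \<in> sets borel" using E0c by (simp add: compact_imp_closed borel_closed)
  have E0fin: "emeasure lborel E0 < \<infinity>" using emeasure_bounded_finite[OF compact_imp_bounded[OF E0c]] .
  have E0eq: "emeasure lborel E0 = ennreal (measure lebesgue E0)"
    using E0b E0fin by (simp add: emeasure_eq_ennreal_measure)
  have BVm: "?BVm > 0" by simp
  have BVn: "?BVn > 0" by simp
  have BVn': "?BVn \<noteq> 0" using BVn by linarith
  have A0fin: "emeasure ?M A0 \<noteq> \<infinity>"
  proof
    assume inf: "emeasure ?M A0 = \<infinity>"
    have "ennreal ?BVn * ennreal ((1/2)^m) * emeasure ?M A0 \<le> ennreal ?BVm * emeasure lborel E0"
      using step_rho[OF assms(1,2), of 2] unfolding A0_def E0_def by simp
    moreover have "ennreal ?BVn * ennreal ((1/2)^m) * emeasure ?M A0 = \<infinity>"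
      using inf BVn' by (simp add: ennreal_mult_eq_top_iff)
    moreover have "ennreal ?BVm * emeasure lborel E0 < \<infinity>"
      using E0fin by (simp add: ennreal_mult_less_top)
    ultimately show False by simp
  qed
  define hv0 where "hv0 = measure ?M A0"
  have A0eq: "emeasure ?M A0 = ennreal hv0"
    using A0fin by (simp add: hv0_def emeasure_eq_ennreal_measure)
  have step: "?BVn * (1/\<rho>)^m * hv0 \<le> ?BVm * measure lebesgue E0" if rho: "\<rho> > 1" for \<rho>
  proof -
    have "ennreal ?BVn * ennreal ((1/\<rho>)^m) * ennreal hv0 \<le> ennreal ?BVm * ennreal (measure lebesgue E0)"
      using step_rho[OF assms(1,2) rho] unfolding A0_def[symmetric] E0_def[symmetric] A0eq E0eq .
    then have "ennreal (?BVn * (1/\<rho>)^m * hv0) \<le> ennreal (?BVm * measure lebesgue E0)"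
      using rho BVn BVm by (simp add: ennreal_mult'' hv0_def)
    then show ?thesis using BVm by (simp add: ennreal_le_iff)
  qed
  have hv0_ge: "hv0 \<ge> ?BVm"
  proof -
    obtain x0 where x0: "x0 \<in> K" using assms(2) by blast
    define p0 where "p0 = (\<lambda>i\<in>{..<m}. x0 \<bullet> b i)"
    have x0eq: "x0 = Tmap m b u (p0, x0 \<bullet> u)" unfolding p0_def by (rule repr)
    have sub: "{z \<in> space ?M. dsq m z p0 \<le> 1\<^sup>2} \<subseteq> A0"
    proof (rule subsetI)
      fix z assume "z \<in> {z \<in> space ?M. dsq m z p0 \<le> 1\<^sup>2}"
      then have z: "z \<in> space ?M" "dsq m z p0 \<le> 1" by auto
      define w where "w = Lmap m b z - Lmap m b p0"
      have "(norm w)\<^sup>2 \<le> 1" using z(2) by (simp add: w_def norm_Lmap_diff_sq)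
      then have nw: "norm w \<le> 1" by (simp add: power_le_one_iff)
      have "x0 + w \<in> E0" unfolding E0_def minkowski_sum_def using x0 nw by fastforce
      moreover have "proj_perp u (x0 + w) = Lmap m b z"
      proof -
        have "proj_perp u w = w" unfolding w_def Lmap_diff by (rule proj_Lmap)
        moreover have "proj_perp u x0 = Lmap m b p0" by (subst x0eq) (simp add: proj_Tmap)
        moreover have "proj_perp u (x0 + w) = proj_perp u x0 + proj_perp u w"
          by (simp add: proj_perp_def inner_add_left scaleR_add_left algebra_simps)
        ultimately show ?thesis by (simp add: w_def)
      qed
      ultimately show "z \<in> A0" unfolding A0_def using z(1) by force
    qed
    have A0m: "A0 \<in> sets ?M"
    proof -
      have "compact (proj_perp u ` E0)"
        by (rule compact_continuous_image[OF _ E0c]) (auto simp: proj_perp_def intro!: continuous_intros)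
      then have "proj_perp u ` E0 \<in> sets borel" by (simp add: compact_imp_closed borel_closed)
      then show ?thesis unfolding A0_def by measurable
    qed
    have "ennreal ?BVm = emeasure ?M {z \<in> space ?M. dsq m z p0 \<le> 1\<^sup>2}"
      using M_ball[of 1 m p0] by simp
    also have "\<dots> \<le> emeasure ?M A0" by (rule emeasure_mono[OF sub A0m])
    finally show ?thesis using A0eq by (simp add: ennreal_le_iff hv0_def)
  qed
  have lim: "((\<lambda>\<rho>. ?BVn * (1/\<rho>)^m * hv0) \<longlongrightarrow> ?BVn * (1/1)^m * hv0) (at_right 1)"
    by (intro tendsto_intros) auto
  have ev: "eventually (\<lambda>\<rho>. ?BVn * (1/\<rho>)^m * hv0 \<le> ?BVm * measure lebesgue E0) (at_right (1::real))"
    using eventually_at_right_less[of "1::real"] by (rule eventually_mono) (rule step)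
  have main: "?BVn * hv0 \<le> ?BVm * measure lebesgue E0"
    using tendsto_le[OF trivial_limit_at_right_real tendsto_const lim ev] by simp
  have hv0pos: "hv0 > 0" using hv0_ge BVm by linarith
  show ?thesis
    unfolding E0_def[symmetric] hv ubv ball hv0_def[symmetric]
    using main hv0pos BVm by (simp add: field_simps)
qed

end
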